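(* Let $t_0=\inf\{x:G([0,x])>0\}$ and suppose $G$ has no atom at $t_0$, i.e. $G(\{t_0\})=0$. Then $\Lambda(v)>t_0+v$ for all $v\ge0$.
   Context: Model: Let $G$ be a probability measure on $[0,\infty)$. In $\mathbb Z^2$, every vertical edge has weight $1$ and every horizontal edge an independent random weight with law $G$; the passage time of a nearest-neighbour path is the sum of its edge weights; $T(u,w)$ is the infimum over paths from $u$ to $w$. For $v\ge0$, $\Lambda(v)=\lim_n\frac1nT((0,0),(n,\lceil vn\rceil))$ (a.s. limit, deterministic). *)

theory Defs
  imports "HOL-Probability.Probability"
begin

type_synonym vtx = "int \<times> int"

definition nn :: "vtx \<Rightarrow> vtx \<Rightarrow> bool" where
  "nn u w \<longleftrightarrow> \<bar>fst u - fst w\<bar> + \<bar>snd u - snd w\<bar> = 1"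

text \<open>An environment omega assigns to each vertex (x,y) the weight of the horizontal
  edge between (x,y) and (x+1,y). Vertical edges have weight 1.\<close>
definition edge_weight :: "(vtx \<Rightarrow> real) \<Rightarrow> vtx \<Rightarrow> vtx \<Rightarrow> real" where
  "edge_weight \<omega> u w = (if fst u = fst w then 1 else \<omega> (min (fst u) (fst w), snd u))"

definition is_path :: "vtx \<Rightarrow> vtx \<Rightarrow> vtx list \<Rightarrow> bool" where
  "is_path u w p \<longleftrightarrow> p \<noteq> [] \<and> hd p = u \<and> last p = w \<and>
     (\<forall>i < length p - 1. nn (p ! i) (p ! Suc i))"

definition passage :: "(vtx \<Rightarrow> real) \<Rightarrow> vtx list \<Rightarrow> real" where
  "passage \<omega> p = (\<Sum>i < length p - 1. edge_weight \<omega> (p ! i) (p ! Suc i))"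

definition T :: "(vtx \<Rightarrow> real) \<Rightarrow> vtx \<Rightarrow> vtx \<Rightarrow> real" where
  "T \<omega> u w = Inf (passage \<omega> ` {p. is_path u w p})"

definition weights_measure :: "real measure \<Rightarrow> (vtx \<Rightarrow> real) measure" where
  "weights_measure G = PiM UNIV (\<lambda>_. G)"

definition t0 :: "real measure \<Rightarrow> real" where
  "t0 G = Inf {x. measure G {0..x} > 0}"

end

theory Submission
  imports Defs
begin


fun var :: "int \<Rightarrow> int list \<Rightarrow> int" where
  "var a [] = 0"
| "var a (y # ys) = \<bar>y - a\<bar> + var y ys"

fun hs :: "(vtx \<Rightarrow> real) \<Rightarrow> int \<Rightarrow> int list \<Rightarrow> real" where
  "hs \<omega> a [] = 0"
| "hs \<omega> a (y # ys) = \<omega> (a, y) + hs \<omega> (a + 1) ys"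

lemma var_nonneg: "var a ys \<ge> 0"
  by (induction ys arbitrary: a) auto

lemma var_shift: "var b zs \<le> \<bar>b - b'\<bar> + var b' zs"
  by (cases zs) auto

lemma var_snoc: "var a xs \<le> var a (xs @ [z])"
  by (induction xs arbitrary: a) auto

lemma var_last: "\<bar>z - a\<bar> \<le> var a (xs @ [z])"
proof (induction xs arbitrary: a)
  case Nil then show ?case by simp
next
  case (Cons y ys)
  have "\<bar>z - a\<bar> \<le> \<bar>y - a\<bar> + \<bar>z - y\<bar>" by simp
  with Cons[of y] show ?case by simp
qed

lemma hs_sum: "hs \<omega> a ys = (\<Sum>i<length ys. \<omega> (a + int i, ys ! i))"
proof (induction ys arbitrary: a)
  case Nil then show ?case by simp
next
  case (Cons y ys)
  show ?case
    by (simp add: Cons sum.lessThan_Suc_shift del: sum.lessThan_Suc) (simp add: algebra_simps)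
qed

lemma passage_single: "passage \<omega> [u] = 0"
  by (simp add: passage_def)

lemma passage_cons2: "passage \<omega> (u # u' # r) = edge_weight \<omega> u u' + passage \<omega> (u' # r)"
  unfolding passage_def by (simp add: sum.lessThan_Suc_shift del: sum.lessThan_Suc)

lemma passage_nonneg:
  assumes "\<forall>z. \<omega> z \<ge> 0" shows "passage \<omega> p \<ge> 0"
  unfolding passage_def edge_weight_def using assms by (intro sum_nonneg) auto

lemma path_bound:
  assumes nonneg: "\<forall>z. \<omega> z \<ge> 0"
  shows "p \<noteq> [] \<Longrightarrow> (\<forall>i < length p - 1. nn (p!i) (p!Suc i)) \<Longrightarrow>
    \<exists>ys. length ys = nat (fst (last p) - fst (hd p)) \<and>
      hs \<omega> (fst (hd p)) ys + real_of_int (var (snd (hd p)) (ys @ [snd (last p)])) \<le> passage \<omega> p"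
proof (induction p)
  case Nil then show ?case by simp
next
  case (Cons u p')
  show ?case
  proof (cases p')
    case Nil
    then show ?thesis by (auto simp: passage_single)
  next
    case (Cons u' r)
    obtain a b where u: "u = (a, b)" by fastforce
    obtain a' b' where u': "u' = (a', b')" by fastforce
    have ch: "\<forall>i < length p' - 1. nn (p'!i) (p'!Suc i)"
    proof (intro allI impI)
      fix i assume "i < length p' - 1"
      then have "Suc i < length (u # p') - 1" by simp
      with Cons.prems(2) have "nn ((u#p')!Suc i) ((u#p')!Suc (Suc i))" by blast
      then show "nn (p'!i) (p'!Suc i)" by simp
    qed
    have "nn u u'" using Cons.prems(2) \<open>p' = u' # r\<close> by force
    then have nnab: "\<bar>a - a'\<bar> + \<bar>b - b'\<bar> = 1" by (simp add: nn_def u u')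
    from Cons.IH[OF _ ch] obtain ys' where
      len': "length ys' = nat (fst (last p') - a')" and
      bd': "hs \<omega> a' ys' + real_of_int (var b' (ys' @ [snd (last p')])) \<le> passage \<omega> p'"
      using \<open>p' = u' # r\<close> u' by auto
    define c where "c = fst (last p')"
    define d where "d = snd (last p')"
    have lastp: "last (u # p') = last p'" using \<open>p' = u' # r\<close> by simp
    have pas: "passage \<omega> (u # p') = edge_weight \<omega> u u' + passage \<omega> p'"
      using \<open>p' = u' # r\<close> passage_cons2 by simp
    have red: "?thesis \<longleftrightarrow> (\<exists>ys. length ys = nat (c - a) \<and>
        hs \<omega> a ys + real_of_int (var b (ys @ [d])) \<le> edge_weight \<omega> u u' + passage \<omega> p')"
      by (simp only: lastp pas list.sel c_def d_def) (simp only: u fst_conv snd_conv)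
    consider "a' = a" "\<bar>b - b'\<bar> = 1" | "a' = a + 1" "b' = b" | "a' = a - 1" "b' = b"
    proof -
      have "a' = a \<and> \<bar>b - b'\<bar> = 1 \<or> a' = a + 1 \<and> b' = b \<or> a' = a - 1 \<and> b' = b"
        using nnab by arith
      then show "(a' = a \<Longrightarrow> \<bar>b - b'\<bar> = 1 \<Longrightarrow> thesis) \<Longrightarrow> (a' = a + 1 \<Longrightarrow> b' = b \<Longrightarrow> thesis) \<Longrightarrow> (a' = a - 1 \<Longrightarrow> b' = b \<Longrightarrow> thesis) \<Longrightarrow> thesis" for thesis
        by blast
    qed
    then show ?thesis
    proof cases
      case 1
      have ew: "edge_weight \<omega> u u' = 1" using 1 by (simp add: edge_weight_def u u')
      have "var b (ys' @ [d]) \<le> 1 + var b' (ys' @ [d])" using var_shift[of b _ b'] 1 by simp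
      then show ?thesis unfolding red using bd' len' 1 pas ew
        by (intro exI[of _ ys']) (auto simp: red c_def[symmetric] d_def[symmetric])
    next
      case 2
      have ew: "edge_weight \<omega> u u' = \<omega> (a, b)" using 2 by (simp add: edge_weight_def u u')
      show ?thesis
      proof (cases "a < c")
        case True
        show ?thesis unfolding red
          using bd' len' 2 pas ew True
          by (intro exI[of _ "b # ys'"]) (auto simp: red c_def[symmetric] d_def[symmetric])
      next
        case False
        then have "ys' = []" using len' 2 by (simp add: c_def)
        then show ?thesis unfolding red
          using bd' 2 pas ew False nonneg
          by (intro exI[of _ "[]"]) (auto simp: red c_def[symmetric] d_def[symmetric] add_increasing)
      qed
    next
      case 3
      have ew: "edge_weight \<omega> u u' = \<omega> (a - 1, b)" using 3 by (simp add: edge_weight_def u u')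
      show ?thesis
      proof (cases "a \<le> c")
        case True
        then obtain y0 ys where ys': "ys' = y0 # ys" using len' 3
          by (cases ys') (auto simp: c_def)
        have "var b (ys @ [d]) \<le> var b (y0 # ys @ [d])" using var_shift[of b "ys @ [d]" y0] by simp
        moreover have "\<omega> (a - 1, y0) \<ge> 0" using nonneg by simp
        ultimately show ?thesis unfolding red
          using bd' len' 3 pas ew True ys' nonneg[rule_format, of "(a-1,b)"]
          by (intro exI[of _ "ys"]) (auto simp: red c_def[symmetric] d_def[symmetric])
      next
        case False
        then have "ys' = []" using len' 3 by (simp add: c_def)
        then show ?thesis unfolding red
          using bd' 3 pas ew False nonneg
          by (intro exI[of _ "[]"]) (auto simp: red c_def[symmetric] d_def[symmetric] add_increasing)
      qed
    qed
  qed
qed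




lemma is_path_cons: "is_path u w p \<Longrightarrow> nn u' u \<Longrightarrow> is_path u' w (u' # p)"
  unfolding is_path_def
proof (elim conjE, intro conjI allI impI)
  fix i assume h: "p \<noteq> []" "hd p = u" "\<forall>i<length p - 1. nn (p ! i) (p ! Suc i)" "nn u' u"
    and i: "i < length (u' # p) - 1"
  show "nn ((u' # p) ! i) ((u' # p) ! Suc i)"
  proof (cases i)
    case 0 then show ?thesis using h by (simp add: hd_conv_nth)
  next
    case (Suc j) then show ?thesis using h i by simp
  qed
qed auto

lemma path_exists_aux: "nat \<bar>c - a\<bar> + nat \<bar>d - b\<bar> = k \<Longrightarrow> \<exists>p. is_path (a, b) (c, d) p"
proof (induction k arbitrary: a b)
  case 0
  then have "a = c" "b = d" by auto
  then show ?case by (intro exI[of _ "[(c,d)]"]) (simp add: is_path_def)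
next
  case (Suc k)
  show ?case
  proof (cases "a \<noteq> c")
    case True
    define a' where "a' = (if a < c then a + 1 else a - 1)"
    have "nat \<bar>c - a'\<bar> + nat \<bar>d - b\<bar> = k" using Suc.prems True by (auto simp: a'_def)
    from Suc.IH[OF this] obtain p where "is_path (a', b) (c, d) p" by blast
    moreover have "nn (a, b) (a', b)" by (auto simp: nn_def a'_def)
    ultimately show ?thesis by (blast intro: is_path_cons)
  next
    case False
    define b' where "b' = (if b < d then b + 1 else b - 1)"
    have "nat \<bar>c - a\<bar> + nat \<bar>d - b'\<bar> = k" using Suc.prems False by (auto simp: b'_def)
    from Suc.IH[OF this] obtain p where "is_path (a, b') (c, d) p" by blast
    moreover have "nn (a, b) (a, b')" by (auto simp: nn_def b'_def)
    ultimately show ?thesis by (blast intro: is_path_cons)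
  qed
qed

lemma path_exists: "\<exists>p. is_path u w p"
  using path_exists_aux[of "fst w" "fst u" "snd w" "snd u"] by auto

lemma T_bound:
  assumes nonneg: "\<forall>z. \<omega> z \<ge> 0" and lt: "T \<omega> (0, 0) (c, d) < C"
  shows "\<exists>ys. length ys = nat c \<and> hs \<omega> 0 ys + real_of_int (var 0 (ys @ [d])) < C"
proof -
  have ne: "passage \<omega> ` {p. is_path (0,0) (c,d) p} \<noteq> {}" using path_exists by blast
  from cInf_lessD[OF ne lt[unfolded T_def]] obtain p where
    p: "is_path (0,0) (c,d) p" and pl: "passage \<omega> p < C" by blast
  from p have "p \<noteq> []" "\<forall>i < length p - 1. nn (p!i) (p!Suc i)" "hd p = (0,0)" "last p = (c,d)"
    by (auto simp: is_path_def)
  from path_bound[OF nonneg this(1,2)] this(3,4) pl show ?thesis by force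
qed

definition Yset :: "int \<Rightarrow> nat \<Rightarrow> nat \<Rightarrow> int list set" where
  "Yset a n K = {ys. length ys = n \<and> var a ys \<le> int K}"

lemma geo_sum_aux: "(\<Sum>j\<in>{- int K..int K}. (2::nat) ^ (K - nat \<bar>j\<bar>)) + 2 \<le> 3 * 2 ^ K"
proof (induction K)
  case 0 then show ?case by simp
next
  case (Suc K)
  have set: "{- int (Suc K)..int (Suc K)} = insert (- int (Suc K)) (insert (int (Suc K)) {- int K..int K})"
    by auto
  have "(\<Sum>j\<in>{- int K..int K}. (2::nat) ^ (Suc K - nat \<bar>j\<bar>)) = (\<Sum>j\<in>{- int K..int K}. 2 * 2 ^ (K - nat \<bar>j\<bar>))"
    by (intro sum.cong refl) (auto simp: Suc_diff_le)
  also have "\<dots> = 2 * (\<Sum>j\<in>{- int K..int K}. 2 ^ (K - nat \<bar>j\<bar>))" by (simp add: sum_distrib_left)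
  finally have eq: "(\<Sum>j\<in>{- int K..int K}. (2::nat) ^ (Suc K - nat \<bar>j\<bar>)) = 2 * (\<Sum>j\<in>{- int K..int K}. 2 ^ (K - nat \<bar>j\<bar>))" .
  have "(\<Sum>j\<in>{- int (Suc K)..int (Suc K)}. (2::nat) ^ (Suc K - nat \<bar>j\<bar>)) = 2 + (\<Sum>j\<in>{- int K..int K}. (2::nat) ^ (Suc K - nat \<bar>j\<bar>))"
    unfolding set by simp
  then show ?case using Suc.IH eq by simp
qed

lemma geo_sum: "(\<Sum>y\<in>{a - int K..a + int K}. (2::nat) ^ (K - nat \<bar>y - a\<bar>)) \<le> 3 * 2 ^ K"
proof -
  have "(\<Sum>y\<in>{a - int K..a + int K}. (2::nat) ^ (K - nat \<bar>y - a\<bar>)) =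
        (\<Sum>j\<in>{- int K..int K}. (2::nat) ^ (K - nat \<bar>j\<bar>))"
    by (rule sum.reindex_bij_witness[of _ "\<lambda>j. j + a" "\<lambda>y. y - a"]) auto
  then show ?thesis using geo_sum_aux[of K] by simp
qed

lemma Yset_card: "finite (Yset a n K) \<and> card (Yset a n K) \<le> 3 ^ n * 2 ^ K"
proof (induction n arbitrary: a K)
  case 0
  have "Yset a 0 K = {[]}" by (auto simp: Yset_def)
  then show ?case by simp
next
  case (Suc n)
  let ?I = "{a - int K..a + int K}"
  have sub: "Yset a (Suc n) K \<subseteq> (\<Union>y\<in>?I. Cons y ` Yset y n (K - nat \<bar>y - a\<bar>))"
  proof
    fix ys assume "ys \<in> Yset a (Suc n) K"
    then obtain y r where ys: "ys = y # r" "length r = n" "\<bar>y - a\<bar> + var y r \<le> int K"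
      by (cases ys) (auto simp: Yset_def)
    have "var y r \<ge> 0" by (rule var_nonneg)
    then have "y \<in> ?I" "r \<in> Yset y n (K - nat \<bar>y - a\<bar>)" using ys by (auto simp: Yset_def)
    then show "ys \<in> (\<Union>y\<in>?I. Cons y ` Yset y n (K - nat \<bar>y - a\<bar>))" using ys by blast
  qed
  have fin: "finite (\<Union>y\<in>?I. Cons y ` Yset y n (K - nat \<bar>y - a\<bar>))" using Suc.IH by auto
  have "card (Yset a (Suc n) K) \<le> card (\<Union>y\<in>?I. Cons y ` Yset y n (K - nat \<bar>y - a\<bar>))"
    by (rule card_mono[OF fin sub])
  also have "\<dots> \<le> (\<Sum>y\<in>?I. card (Cons y ` Yset y n (K - nat \<bar>y - a\<bar>)))"
    by (rule card_UN_le) simp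
  also have "\<dots> \<le> (\<Sum>y\<in>?I. 3 ^ n * 2 ^ (K - nat \<bar>y - a\<bar>))"
    by (intro sum_mono order.trans[OF card_image_le]) (use Suc.IH in auto)
  also have "\<dots> = 3 ^ n * (\<Sum>y\<in>?I. 2 ^ (K - nat \<bar>y - a\<bar>))" by (simp add: sum_distrib_left)
  also have "\<dots> \<le> 3 ^ n * (3 * 2 ^ K)" by (intro mult_left_mono geo_sum) simp
  finally show ?case using finite_subset[OF sub fin] by simp
qed




lemma G_facts:
  assumes P: "prob_space G" and sG: "sets G = sets borel" and neg: "measure G {..<0} = 0"
    and at: "measure G {t0 G} = 0"
  shows "t0 G \<ge> 0" and "measure G {..t0 G} = 0"
proof -
  interpret prob_space G by (rule P)
  have nullI: "A \<in> null_sets G" if "A \<in> sets borel" "measure G A = 0" for A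
    using that by (intro null_setsI) (auto simp: emeasure_eq_measure sG)
  have sp: "space G = UNIV" using sets_eq_imp_space_eq[OF sG] by simp
  define S where "S = {x. measure G {0..x} > 0}"
  have t0S: "t0 G = Inf S" by (simp add: t0_def S_def)
  have lowb: "0 \<le> x" if "x \<in> S" for x
  proof (rule ccontr)
    assume "\<not> 0 \<le> x" then have "{0..x} = {}" by auto
    with that show False by (simp add: S_def)
  qed
  have ne: "S \<noteq> {}"
  proof
    assume "S = {}"
    have z: "measure G {0..x} = 0" for x
    proof -
      have "\<not> 0 < measure G {0..x}" using \<open>S = {}\<close> unfolding S_def by blast
      then show ?thesis using measure_nonneg[of G "{0..x}"] by linarith
    qed
    have "(\<Union>n::nat. {0..real n}) \<in> null_sets G" using z by (intro null_sets_UN nullI) auto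
    moreover have "{..<0::real} \<in> null_sets G" using neg by (intro nullI) auto
    ultimately have "{..<0::real} \<union> (\<Union>n::nat. {0..real n}) \<in> null_sets G" by blast
    moreover have "{..<0::real} \<union> (\<Union>n::nat. {0..real n}) = UNIV"
    proof -
      have "x \<in> {..<0::real} \<union> (\<Union>n::nat. {0..real n})" for x
      proof (cases "x < 0")
        case False
        obtain n where "x \<le> real n" using real_arch_simple by blast
        with False show ?thesis by auto
      qed auto
      then show ?thesis by blast
    qed
    ultimately have "emeasure G (space G) = 0" using sp by auto
    then show False using emeasure_space_1 by simp
  qed
  have bdd: "bdd_below S" using lowb by (intro bdd_belowI[of _ 0]) auto
  show t0nn: "t0 G \<ge> 0" unfolding t0S by (rule cInf_greatest[OF ne]) (use lowb in auto)
  have below: "measure G {0..x} = 0" if "x < t0 G" for x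
  proof (rule ccontr)
    assume "measure G {0..x} \<noteq> 0"
    then have "0 < measure G {0..x}" using measure_nonneg[of G "{0..x}"] by linarith
    then have "x \<in> S" by (simp add: S_def)
    then have "Inf S \<le> x" by (rule cInf_lower[OF _ bdd])
    with that show False by (simp add: t0S)
  qed
  have N1: "(\<Union>n::nat. {0..t0 G - 1 / (real n + 1)}) \<in> null_sets G"
    by (intro null_sets_UN nullI) (auto intro!: below)
  have N2: "{..<0::real} \<in> null_sets G" using neg by (intro nullI) auto
  have N3: "{t0 G} \<in> null_sets G" using at by (intro nullI) auto
  have cov: "{..t0 G} \<subseteq> {..<0} \<union> (\<Union>n::nat. {0..t0 G - 1 / (real n + 1)}) \<union> {t0 G}"
  proof
    fix x assume x: "x \<in> {..t0 G}"
    show "x \<in> {..<0} \<union> (\<Union>n::nat. {0..t0 G - 1 / (real n + 1)}) \<union> {t0 G}"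
    proof (cases "x < 0 \<or> x = t0 G")
      case False
      then have "0 < t0 G - x" "0 \<le> x" using x by auto
      from reals_Archimedean[OF this(1)] obtain n where n: "inverse (real (Suc n)) < t0 G - x" by blast
      then have "x \<le> t0 G - 1 / (real n + 1)" by (simp add: field_simps)
      with \<open>0 \<le> x\<close> show ?thesis by auto
    qed auto
  qed
  have "{..t0 G} \<in> null_sets G"
  proof (rule null_sets_subset[OF _ _ cov])
    show "{..<0} \<union> (\<Union>n::nat. {0..t0 G - 1 / (real n + 1)}) \<union> {t0 G} \<in> null_sets G"
      using N1 N2 N3 by (intro null_sets.Un)
  qed (use sG in auto)
  then show "measure G {..t0 G} = 0" by (simp add: measure_def null_setsD1)
qed

lemma G_small:
  assumes P: "prob_space G" and sG: "sets G = sets borel" and z: "measure G {..t0 G} = 0"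
    and e: "e > 0"
  shows "\<exists>\<delta>. 0 < \<delta> \<and> \<delta> \<le> 1 \<and> measure G {..<t0 G + \<delta>} \<le> e"
proof -
  interpret prob_space G by (rule P)
  define A where "A n = {..<t0 G + 1 / (real n + 1)}" for n :: nat
  have dec: "decseq A" unfolding A_def decseq_def
    by (auto simp: frac_le)
  have inter: "(\<Inter>n. A n) = {..t0 G}"
  proof
    show "{..t0 G} \<subseteq> (\<Inter>n. A n)" by (auto simp: A_def intro: order.strict_trans1)
    show "(\<Inter>n. A n) \<subseteq> {..t0 G}"
    proof
      fix x assume x: "x \<in> (\<Inter>n. A n)"
      show "x \<in> {..t0 G}"
      proof (rule ccontr)
        assume "x \<notin> {..t0 G}" then have "0 < x - t0 G" by auto
        from reals_Archimedean[OF this] obtain n where "inverse (real (Suc n)) < x - t0 G" by blast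
        moreover have "x < t0 G + 1 / (real n + 1)" using x by (auto simp: A_def)
        ultimately show False by (simp add: field_simps)
      qed
    qed
  qed
  have "(\<lambda>n. measure G (A n)) \<longlonglongrightarrow> measure G (\<Inter>n. A n)"
    by (rule finite_Lim_measure_decseq[OF _ dec]) (auto simp: A_def sG)
  then have "(\<lambda>n. measure G (A n)) \<longlonglongrightarrow> 0" using inter z by simp
  from order_tendstoD(2)[OF this e] obtain n where "measure G (A n) < e"
    by (auto simp: eventually_sequentially)
  then show ?thesis
    by (intro exI[of _ "1 / (real n + 1)"]) (auto simp: A_def)
qed




lemma cyl_facts:
  assumes P: "prob_space G" and sG: "sets G = sets borel" and J: "finite J" and A: "A \<in> sets borel"
  shows "{\<omega> \<in> space (PiM UNIV (\<lambda>_::vtx. G)). \<forall>z\<in>J. \<omega> z \<in> A} \<in> sets (PiM UNIV (\<lambda>_::vtx. G))"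
    and "measure (PiM UNIV (\<lambda>_::vtx. G)) {\<omega> \<in> space (PiM UNIV (\<lambda>_::vtx. G)). \<forall>z\<in>J. \<omega> z \<in> A}
          = measure G A ^ card J"
proof -
  interpret product_prob_space "\<lambda>_::vtx. G" UNIV
    by (rule product_prob_spaceI) (rule P)
  have eq: "{\<omega> \<in> space (PiM UNIV (\<lambda>_::vtx. G)). \<forall>z\<in>J. \<omega> z \<in> A}
      = prod_emb UNIV (\<lambda>_. G) J (Pi\<^sub>E J (\<lambda>_. A))"
    unfolding prod_emb_def by (auto simp: space_PiM Pi_iff)
  show "{\<omega> \<in> space (PiM UNIV (\<lambda>_::vtx. G)). \<forall>z\<in>J. \<omega> z \<in> A} \<in> sets (PiM UNIV (\<lambda>_::vtx. G))"
    unfolding eq by (rule sets_PiM_I) (use J A sG in auto)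
  have "emeasure (PiM UNIV (\<lambda>_::vtx. G)) {\<omega> \<in> space (PiM UNIV (\<lambda>_::vtx. G)). \<forall>z\<in>J. \<omega> z \<in> A}
      = (\<Prod>z\<in>J. emeasure G A)"
    by (rule emeasure_PiM_Collect) (use J A sG in auto)
  then show "measure (PiM UNIV (\<lambda>_::vtx. G)) {\<omega> \<in> space (PiM UNIV (\<lambda>_::vtx. G)). \<forall>z\<in>J. \<omega> z \<in> A}
          = measure G A ^ card J"
    unfolding P.emeasure_eq_measure M.emeasure_eq_measure
    by (simp add: ennreal_power measure_nonneg)
qed

lemma space_weights: "sets G = sets borel \<Longrightarrow> space (PiM UNIV (\<lambda>_::vtx. G)) = UNIV"
  using sets_eq_imp_space_eq[of G borel] by (simp add: space_PiM PiE_UNIV_domain)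




theorem proposition3p13:
  fixes G :: "real measure" and v L :: real
  assumes "prob_space G"
    and "sets G = sets borel"
    and "measure G {..<0} = 0"
    and "measure G {t0 G} = 0"
    and "v \<ge> 0"
    and "AE \<omega> in weights_measure G.
           (\<lambda>n. T \<omega> (0, 0) (int n, \<lceil>v * real n\<rceil>) / real n) \<longlonglongrightarrow> L"
  shows "L > t0 G + v"
proof (rule ccontr)
  assume "\<not> L > t0 G + v"
  then have Lle: "L \<le> t0 G + v" by simp
  note P = assms(1) and sG = assms(2)
  define t where "t = t0 G"
  note gf = G_facts[OF assms(1-4)]
  have t_nn: "t \<ge> 0" using gf(1) by (simp add: t_def)
  define B where "B = (2::real) powr (v + 1)"
  have B_pos: "B > 0" by (simp add: B_def)
  define r where "r = 1 / (12 * B)"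
  have r_pos: "r > 0" using B_pos by (simp add: r_def)
  have "B \<ge> 1" unfolding B_def using assms(5) by (intro ge_one_powr_ge_zero) auto
  then have r_le1: "r \<le> 1" by (simp add: r_def)
  obtain \<delta> where \<delta>: "0 < \<delta>" "\<delta> \<le> 1" "measure G {..<t + \<delta>} \<le> r ^ 2"
    using G_small[OF P sG gf(2)] r_pos unfolding t_def by (metis zero_less_power)
  define q where "q = measure G {..<t + \<delta>}"
  have q: "0 \<le> q" "q \<le> r ^ 2" using \<delta> by (auto simp: q_def)
  define MM where "MM = PiM UNIV (\<lambda>_::vtx. G)"
  interpret PP: product_prob_space "\<lambda>_::vtx. G" UNIV
    by (rule product_prob_spaceI) (rule P)
  have spMM: "space MM = UNIV" unfolding MM_def by (rule space_weights[OF sG])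
  define K where "K n = nat \<lfloor>(v + 1) * real n\<rfloor>" for n :: nat
  define Cs where "Cs n = {S. S \<subseteq> {..<n} \<and> n \<le> 2 * card S}" for n :: nat
  define E where "E ys S = {\<omega> \<in> space MM. \<forall>z\<in>(\<lambda>i. (int i, ys ! i)) ` S. \<omega> z \<in> {..<t + \<delta>}}"
    for ys :: "int list" and S :: "nat set"
  define C where "C n = (\<Union>p \<in> Yset 0 n (K n) \<times> Cs n. E (fst p) (snd p))" for n
  have finCs: "finite (Cs n)" for n
    by (rule finite_subset[of _ "Pow {..<n}"]) (auto simp: Cs_def)
  have cardCs: "card (Cs n) \<le> 2 ^ n" for n
  proof -
    have "card (Cs n) \<le> card (Pow {..<n})" by (rule card_mono) (auto simp: Cs_def)
    then show ?thesis by (simp add: card_Pow)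
  qed
  have finS: "finite S" if "S \<in> Cs n" for S n
    using that by (auto simp: Cs_def intro: finite_subset)
  have E_sets: "E ys S \<in> sets MM" if "S \<in> Cs n" for ys S n
    unfolding E_def MM_def by (rule cyl_facts(1)[OF P sG]) (use finS[OF that] in auto)
  have E_meas: "measure MM (E ys S) \<le> r ^ n" if "S \<in> Cs n" for ys S n
  proof -
    have inj: "inj_on (\<lambda>i. (int i, ys ! i)) S" by (auto simp: inj_on_def)
    have "measure MM (E ys S) = q ^ card ((\<lambda>i. (int i, ys ! i)) ` S)"
      unfolding E_def MM_def q_def by (rule cyl_facts(2)[OF P sG]) (use finS[OF that] in auto)
    also have "\<dots> = q ^ card S" using card_image[OF inj] by simp
    also have "\<dots> \<le> (r ^ 2) ^ card S" by (intro power_mono q)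
    also have "\<dots> = r ^ (2 * card S)" by (simp add: power_mult)
    also have "\<dots> \<le> r ^ n"
      using that r_pos r_le1 by (intro power_decreasing) (auto simp: Cs_def)
    finally show ?thesis .
  qed
  have C_sets: "C n \<in> sets MM" for n
    unfolding C_def using Yset_card[of 0 n "K n"] finCs[of n] E_sets
    by (intro sets.finite_UN) (auto simp: mem_Times_iff)
  have powK: "real (2 ^ K n) \<le> B ^ n" for n
  proof -
    have Kle: "real (K n) \<le> (v + 1) * real n"
      using assms(5) by (simp add: K_def)
    have "real (2 ^ K n) = 2 powr real (K n)" by (simp add: powr_realpow)
    also have "\<dots> \<le> 2 powr ((v + 1) * real n)" by (rule powr_mono[OF Kle]) simp
    also have "\<dots> = B ^ n" unfolding B_def by (simp add: powr_powr[symmetric] powr_realpow)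
    finally show ?thesis .
  qed
  have C_meas: "measure MM (C n) \<le> (1/2) ^ n" for n
  proof -
    have "measure MM (C n) \<le> (\<Sum>p\<in>Yset 0 n (K n) \<times> Cs n. measure MM (E (fst p) (snd p)))"
      unfolding C_def using Yset_card[of 0 n "K n"] finCs[of n] E_sets
      by (intro measure_UNION_le) (auto simp: mem_Times_iff)
    also have "\<dots> \<le> (\<Sum>p\<in>Yset 0 n (K n) \<times> Cs n. r ^ n)"
      by (intro sum_mono E_meas) (auto simp: mem_Times_iff)
    also have "\<dots> = real (card (Yset 0 n (K n)) * card (Cs n)) * r ^ n"
      by (simp add: card_cartesian_product)
    also have "\<dots> \<le> real (3 ^ n * 2 ^ K n * 2 ^ n) * r ^ n"
      using Yset_card[of 0 n "K n"] cardCs[of n] r_pos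
      by (intro mult_right_mono) (auto intro!: mult_mono simp del: of_nat_mult)
    also have "\<dots> = 3 ^ n * real (2 ^ K n) * 2 ^ n * r ^ n" by simp
    also have "\<dots> \<le> 3 ^ n * B ^ n * 2 ^ n * r ^ n"
      using powK[of n] r_pos by (intro mult_right_mono) auto
    also have "\<dots> = (3 * 2 * B * r) ^ n" by (simp only: power_mult_distrib mult_ac)
    also have "3 * 2 * B * r = 1/2" using B_pos by (simp add: r_def)
    finally show ?thesis .
  qed
  have summ: "summable (\<lambda>n. measure MM (C n))"
    by (rule summable_comparison_test[of _ "\<lambda>n. (1/2::real) ^ n"]) (use C_meas in auto)
  have BC: "AE \<omega> in MM. eventually (\<lambda>n. \<omega> \<in> space MM - C n) sequentially"
    by (rule borel_cantelli_AE1[OF C_sets _ summ]) (simp add: MM_def PP.P.emeasure_eq_measure)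
  have AEge: "AE \<omega> in MM. \<forall>z. t \<le> \<omega> z"
    unfolding AE_all_countable
  proof
    fix z :: vtx
    define N where "N = {\<omega> \<in> space MM. \<forall>y\<in>{z}. \<omega> y \<in> {..<t}}"
    have Nsets: "N \<in> sets MM"
      unfolding N_def MM_def by (rule cyl_facts(1)[OF P sG]) auto
    have "measure MM N = measure G {..<t}"
      unfolding N_def MM_def using cyl_facts(2)[OF P sG, of "{z}" "{..<t}"] by simp
    also have "measure G {..<t} = 0"
    proof -
      interpret prob_space G by (rule P)
      have "measure G {..<t} \<le> measure G {..t}"
        by (intro PP.M.finite_measure_mono) (auto simp: sG)
      then show ?thesis using gf(2) measure_nonneg[of G "{..<t}"] by (simp add: t_def measure_le_0_iff)
    qed
    finally have "N \<in> null_sets MM"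
      using Nsets by (intro null_setsI) (simp add: MM_def PP.P.emeasure_eq_measure)
    then have "AE \<omega> in MM. \<omega> \<notin> N" using AE_iff_null_sets[OF Nsets] by simp
    then show "AE \<omega> in MM. t \<le> \<omega> z"
      by eventually_elim (auto simp: N_def spMM)
  qed
  have core: False if conv: "(\<lambda>n. T \<omega> (0, 0) (int n, \<lceil>v * real n\<rceil>) / real n) \<longlonglongrightarrow> L"
    and ev: "eventually (\<lambda>n. \<omega> \<in> space MM - C n) sequentially"
    and ge: "\<forall>z. t \<le> \<omega> z" for \<omega>
  proof -
    have ev2: "eventually (\<lambda>n. T \<omega> (0, 0) (int n, \<lceil>v * real n\<rceil>) / real n < t + v + \<delta> / 2) sequentially"
      by (rule order_tendstoD(2)[OF conv]) (use Lle \<delta> in \<open>simp add: t_def\<close>)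
    have "eventually (\<lambda>n. (\<omega> \<in> space MM - C n \<and> T \<omega> (0, 0) (int n, \<lceil>v * real n\<rceil>) / real n < t + v + \<delta> / 2)
       \<and> n \<ge> 1) sequentially"
      by (intro eventually_conj ev ev2 eventually_ge_at_top)
    then obtain n where n: "\<omega> \<notin> C n" "T \<omega> (0, 0) (int n, \<lceil>v * real n\<rceil>) / real n < t + v + \<delta> / 2" "n \<ge> 1"
      unfolding eventually_sequentially by auto
    define m where "m = \<lceil>v * real n\<rceil>"
    have Tlt: "T \<omega> (0, 0) (int n, m) < (t + v + \<delta> / 2) * real n"
      using n(2,3) by (simp add: m_def divide_less_eq)
    have nonneg: "\<forall>z. \<omega> z \<ge> 0" using ge t_nn by (meson order_trans)
    from T_bound[OF nonneg Tlt] obtain ys where ys: "length ys = n"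
      "hs \<omega> 0 ys + real_of_int (var 0 (ys @ [m])) < (t + v + \<delta> / 2) * real n" by auto
    define w where "w i = \<omega> (int i, ys ! i)" for i
    have hsw: "hs \<omega> 0 ys = (\<Sum>i<n. w i)" using hs_sum[of \<omega> 0 ys] ys(1) by (simp add: w_def)
    define S where "S = {i \<in> {..<n}. w i < t + \<delta>}"
    define D where "D = {i \<in> {..<n}. \<not> w i < t + \<delta>}"
    have SD: "card S + card D = n"
    proof -
      have "card (S \<union> D) = card S + card D"
        by (rule card_Un_disjoint) (auto simp: S_def D_def)
      moreover have "S \<union> D = {..<n}" by (auto simp: S_def D_def)
      ultimately show ?thesis by simp
    qed
    have "(\<Sum>i<n. w i) \<ge> (\<Sum>i<n. t + (if w i < t + \<delta> then 0 else \<delta>))"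
      by (intro sum_mono) (use ge in \<open>auto simp: w_def\<close>)
    also have "(\<Sum>i<n. t + (if w i < t + \<delta> then 0 else \<delta>)) = real n * t + real (card D) * \<delta>"
    proof -
      have "(\<Sum>i<n. (if w i < t + \<delta> then 0 else \<delta>)) = (\<Sum>i\<in>D. \<delta>)"
        unfolding D_def by (subst sum.inter_filter) (auto intro!: sum.cong)
      then show ?thesis by (simp add: sum.distrib)
    qed
    finally have sumlow: "(\<Sum>i<n. w i) \<ge> real n * t + real (card D) * \<delta>" .
    have "real_of_int m \<le> real_of_int (var 0 (ys @ [m]))"
      using var_last[of m 0 ys] by simp
    moreover have "v * real n \<le> real_of_int m" by (simp add: m_def)
    ultimately have varlow: "v * real n \<le> real_of_int (var 0 (ys @ [m]))" by linarith
    have "real (card D) * \<delta> < \<delta> / 2 * real n"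
      using ys(2) hsw sumlow varlow by (simp add: algebra_simps)
    then have "2 * real (card D) < real n" using \<delta>(1) by (simp add: field_simps)
    then have "n \<le> 2 * card S" using SD by linarith
    then have SC: "S \<in> Cs n" by (auto simp: Cs_def S_def)
    have "real_of_int (var 0 ys) \<le> real_of_int (var 0 (ys @ [m]))" using var_snoc[of 0 ys m] by simp
    also have "\<dots> < (t + v + \<delta> / 2) * real n - real n * t" 
    proof -
      have "0 \<le> real (card D) * \<delta>" using \<delta>(1) by simp
      then show ?thesis using ys(2) hsw sumlow by linarith
    qed
    also have "\<dots> \<le> (v + 1) * real n"
    proof -
      have "\<delta> * real n \<le> 1 * real n" using \<delta>(2) by (intro mult_right_mono) auto
      then show ?thesis by (simp add: algebra_simps)
    qed
    finally have "var 0 ys \<le> \<lfloor>(v + 1) * real n\<rfloor>" by (simp add: le_floor_iff)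
    then have "var 0 ys \<le> int (K n)" using assms(5) by (simp add: K_def)
    then have YC: "ys \<in> Yset 0 n (K n)" using ys(1) by (simp add: Yset_def)
    have "\<omega> \<in> E ys S" by (auto simp: E_def spMM S_def w_def)
    then have "\<omega> \<in> C n" using YC SC unfolding C_def by force
    with n(1) show False by simp
  qed
  have "AE \<omega> in MM. False"
    using assms(6)[unfolded weights_measure_def MM_def[symmetric]] BC AEge
    by eventually_elim (use core in blast)
  then show False unfolding MM_def by (simp add: PP.P.AE_False)
qed


end
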